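(* If a finite group $G$ is a $Q\sigma T$-group, then every quotient $G/N$ of $G$ by a normal subgroup $N$ is also a $Q\sigma T$-group.
   Context: $\sigma=\{\sigma_i\mid i\in I\}$ is a partition of the set of all primes. A group is $\sigma$-primary if it is a $\sigma_i$-group for some $i$. $A_G$ is the core of $A$ in $G$. $A$ is $\sigma$-subnormal in $G$ if there is a chain $A=A_0\le\cdots\le A_n=G$ with, for each $i$, $A_{i-1}\trianglelefteq A_i$ or $A_i/(A_{i-1})_{A_i}$ $\sigma$-primary. $A$ is modular in $G$ if (1) $\langle X, A\cap Z\rangle=\langle X,A\rangle\cap Z$ for all $X\le Z\le G$, and (2) $\langle A, Y\cap Z\rangle=\langle A,Y\rangle\cap Z$ for all $Y,Z\le G$ with $A\le Z$. $A$ is $\sigma$-quasinormal in $G$ if it is $\sigma$-subnormal and modular. $G$ is a $Q\sigma T$-group if whenever $H$ is $\sigma$-quasinormal in $K$ and $K$ is $\sigma$-quasinormal in $G$, $H$ is $\sigma$-quasinormal in $G$. *)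

theory Defs
  imports "HOL-Algebra.Algebra" "HOL-Computational_Algebra.Primes"
begin

definition sigma_partition :: "nat set set \<Rightarrow> bool" where
  "sigma_partition \<Sigma> \<longleftrightarrow>
     (\<forall>s\<in>\<Sigma>. s \<noteq> {}) \<and> \<Union>\<Sigma> = {p. Factorial_Ring.prime (p::nat)} \<and>
     (\<forall>s\<in>\<Sigma>. \<forall>t\<in>\<Sigma>. s \<noteq> t \<longrightarrow> s \<inter> t = {})"

definition pi_group :: "nat set \<Rightarrow> ('a, 'b) monoid_scheme \<Rightarrow> bool" where
  "pi_group \<pi> H \<longleftrightarrow> (\<forall>p. Factorial_Ring.prime (p::nat) \<and> p dvd order H \<longrightarrow> p \<in> \<pi>)"

definition sigma_primary :: "nat set set \<Rightarrow> ('a, 'b) monoid_scheme \<Rightarrow> bool" where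
  "sigma_primary \<Sigma> H \<longleftrightarrow> (\<exists>s\<in>\<Sigma>. pi_group s H)"

definition core :: "('a, 'b) monoid_scheme \<Rightarrow> 'a set \<Rightarrow> 'a set" where
  "core G A = (\<Inter>g\<in>carrier G. (g <#\<^bsub>G\<^esub> A) #>\<^bsub>G\<^esub> inv\<^bsub>G\<^esub> g)"

definition sigma_subnormal :: "nat set set \<Rightarrow> ('a, 'b) monoid_scheme \<Rightarrow> 'a set \<Rightarrow> bool" where
  "sigma_subnormal \<Sigma> G A \<longleftrightarrow>
     (\<exists>(n::nat) (f::nat \<Rightarrow> 'a set). f 0 = A \<and> f n = carrier G \<and>
        (\<forall>i\<le>n. subgroup (f i) G) \<and>
        (\<forall>i<n. f i \<subseteq> f (Suc i) \<and>
           (f i \<lhd> G\<lparr>carrier := f (Suc i)\<rparr> \<or>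
            sigma_primary \<Sigma> ((G\<lparr>carrier := f (Suc i)\<rparr>) Mod (core (G\<lparr>carrier := f (Suc i)\<rparr>) (f i))))))"

definition modular_subgroup :: "('a, 'b) monoid_scheme \<Rightarrow> 'a set \<Rightarrow> bool" where
  "modular_subgroup G A \<longleftrightarrow> subgroup A G \<and>
     (\<forall>U W. subgroup U G \<longrightarrow> subgroup W G \<longrightarrow> U \<subseteq> W \<longrightarrow>
        generate G (U \<union> (A \<inter> W)) = generate G (U \<union> A) \<inter> W) \<and>
     (\<forall>V W. subgroup V G \<longrightarrow> subgroup W G \<longrightarrow> A \<subseteq> W \<longrightarrow>
        generate G (A \<union> (V \<inter> W)) = generate G (A \<union> V) \<inter> W)"

definition sigma_quasinormal :: "nat set set \<Rightarrow> ('a, 'b) monoid_scheme \<Rightarrow> 'a set \<Rightarrow> bool" where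
  "sigma_quasinormal \<Sigma> G A \<longleftrightarrow> subgroup A G \<and> sigma_subnormal \<Sigma> G A \<and> modular_subgroup G A"

definition QsigmaT :: "nat set set \<Rightarrow> ('a, 'b) monoid_scheme \<Rightarrow> bool" where
  "QsigmaT \<Sigma> G \<longleftrightarrow>
     (\<forall>H K. sigma_quasinormal \<Sigma> G K \<longrightarrow> sigma_quasinormal \<Sigma> (G\<lparr>carrier := K\<rparr>) H \<longrightarrow>
        sigma_quasinormal \<Sigma> G H)"

end

theory Submission
  imports Defs
begin


lemma ne_helper: "a \<in> A \<Longrightarrow> A \<noteq> {}" by blast

context normal
begin

lemma rc_carrier: "x \<in> carrier G \<Longrightarrow> H #> x \<in> carrier (G Mod H)"
  by (simp add: FactGroup_def rcosetsI subset)

lemma rc_mult: "x \<in> carrier G \<Longrightarrow> y \<in> carrier G \<Longrightarrow> (H #> x) \<otimes>\<^bsub>G Mod H\<^esub> (H #> y) = H #> (x \<otimes> y)"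
  by (simp add: rcos_sum)

lemma rc_inv: "x \<in> carrier G \<Longrightarrow> inv\<^bsub>G Mod H\<^esub> (H #> x) = H #> inv x"
  by (simp add: inv_FactGroup rc_carrier rcos_inv)

lemma rc_one: "\<one>\<^bsub>G Mod H\<^esub> = H #> \<one>"
  by (simp add: subset)

lemma rcosets_elem: "C \<in> rcosets H \<Longrightarrow> \<exists>x\<in>carrier G. C = H #> x"
  unfolding RCOSETS_def by blast

lemma Union_rc_iff:
  assumes "A \<subseteq> carrier (G Mod H)" "x \<in> carrier G"
  shows "x \<in> \<Union>A \<longleftrightarrow> H #> x \<in> A"
proof
  assume "x \<in> \<Union>A" then obtain C where C: "C \<in> A" "x \<in> C" by blast
  then obtain y where y: "y \<in> carrier G" "C = H #> y" using assms(1) rcosets_elem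
    unfolding FactGroup_def by auto
  have "H #> y = H #> x" using repr_independence[of x H y] y C subgroup_axioms by auto
  then show "H #> x \<in> A" using C y by simp
next
  assume "H #> x \<in> A" then show "x \<in> \<Union>A" using rcos_self[OF assms(2) subgroup_axioms] by blast
qed

lemma Union_sub_carrier:
  assumes "A \<subseteq> carrier (G Mod H)" shows "\<Union>A \<subseteq> carrier G"
  using assms rcosets_carrier[OF is_group] unfolding FactGroup_def by auto

lemma rc_image_Union:
  assumes "A \<subseteq> carrier (G Mod H)" shows "A = (\<lambda>x. H #> x) ` \<Union>A"
proof
  show "A \<subseteq> (\<lambda>x. H #> x) ` \<Union>A"
  proof
    fix C assume C: "C \<in> A"
    then obtain y where y: "y \<in> carrier G" "C = H #> y" using assms(1) rcosets_elem
      unfolding FactGroup_def by auto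
    then have "y \<in> \<Union>A" using C rcos_self[OF y(1) subgroup_axioms] by blast
    then show "C \<in> (\<lambda>x. H #> x) ` \<Union>A" using y by blast
  qed
next
  show "(\<lambda>x. H #> x) ` \<Union>A \<subseteq> A"
    using Union_rc_iff[OF assms] Union_sub_carrier[OF assms] by blast
qed

lemma Union_inj:
  assumes "A \<subseteq> carrier (G Mod H)" "B \<subseteq> carrier (G Mod H)" "\<Union>A = \<Union>B"
  shows "A = B"
  using rc_image_Union[OF assms(1)] rc_image_Union[OF assms(2)] assms(3) by simp

lemma lift_subgroup:
  assumes "subgroup A (G Mod H)"
  shows "subgroup (\<Union>A) G" "H \<subseteq> \<Union>A"
proof -
  have Asub: "A \<subseteq> carrier (G Mod H)" using assms subgroup.subset by blast
  have "H \<in> A" using subgroup.one_closed[OF assms] by simp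
  then show "H \<subseteq> \<Union>A" by blast
  show "subgroup (\<Union>A) G"
  proof (rule subgroupI)
    show "\<Union>A \<subseteq> carrier G" by (rule Union_sub_carrier[OF Asub])
    have "\<one> \<in> \<Union>A" using \<open>H \<in> A\<close> subgroup.one_closed[OF subgroup_axioms] by (rule UnionI)
    then show "\<Union>A \<noteq> {}" by (rule ne_helper)
    fix a assume a: "a \<in> \<Union>A"
    have ac: "a \<in> carrier G" using a Union_sub_carrier[OF Asub] by blast
    have "H #> a \<in> A" using Union_rc_iff[OF Asub ac] a by blast
    then have "inv\<^bsub>G Mod H\<^esub> (H #> a) \<in> A" using subgroup.m_inv_closed[OF assms] by blast
    then show "inv a \<in> \<Union>A" using rc_inv[OF ac] Union_rc_iff[OF Asub] ac by simp
    fix b assume b: "b \<in> \<Union>A"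
    have bc: "b \<in> carrier G" using b Union_sub_carrier[OF Asub] by blast
    have "H #> b \<in> A" using Union_rc_iff[OF Asub bc] b by blast
    then have "(H #> a) \<otimes>\<^bsub>G Mod H\<^esub> (H #> b) \<in> A" using subgroup.m_closed[OF assms] \<open>H #> a \<in> A\<close> by blast
    then show "a \<otimes> b \<in> \<Union>A" using rc_mult[OF ac bc] Union_rc_iff[OF Asub] ac bc by simp
  qed
qed

lemma img_sub: "S \<subseteq> carrier G \<Longrightarrow> (\<lambda>x. H #> x) ` S \<subseteq> carrier (G Mod H)"
  using rc_carrier by blast

lemma img_Union:
  assumes "subgroup S G" "H \<subseteq> S"
  shows "\<Union>((\<lambda>x. H #> x) ` S) = S"
proof
  show "\<Union>((\<lambda>x. H #> x) ` S) \<subseteq> S"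
  proof
    fix y assume "y \<in> \<Union>((\<lambda>x. H #> x) ` S)"
    then obtain s h where "s \<in> S" "h \<in> H" "y = h \<otimes> s" unfolding r_coset_def by blast
    then show "y \<in> S" using assms(2) subgroup.m_closed[OF assms(1)] by blast
  qed
next
  show "S \<subseteq> \<Union>((\<lambda>x. H #> x) ` S)"
  proof
    fix x assume x: "x \<in> S"
    then have "x \<in> carrier G" using assms(1) subgroup.subset by blast
    then have "x \<in> H #> x" by (rule rcos_self[OF _ subgroup_axioms])
    with x show "x \<in> \<Union>((\<lambda>x. H #> x) ` S)" by blast
  qed
qed

lemma img_subgroup:
  assumes "subgroup S G" "H \<subseteq> S"
  shows "subgroup ((\<lambda>x. H #> x) ` S) (G Mod H)"
proof -
  interpret Q: group "G Mod H" by (rule factorgroup_is_group)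
  have Sc: "S \<subseteq> carrier G" using assms(1) subgroup.subset by blast
  show ?thesis
  proof (rule Q.subgroupI)
    show "(\<lambda>x. H #> x) ` S \<subseteq> carrier (G Mod H)" by (rule img_sub[OF Sc])
    have "H #> \<one> \<in> (\<lambda>x. H #> x) ` S" using subgroup.one_closed[OF assms(1)] by (rule imageI)
    then show "(\<lambda>x. H #> x) ` S \<noteq> {}" by (rule ne_helper)
    fix a assume "a \<in> (\<lambda>x. H #> x) ` S"
    then obtain x where x: "x \<in> S" "a = H #> x" by blast
    then have xc: "x \<in> carrier G" using Sc by blast
    have "H #> inv x \<in> (\<lambda>x. H #> x) ` S" using subgroup.m_inv_closed[OF assms(1) x(1)] by (rule imageI)
    then show "inv\<^bsub>G Mod H\<^esub> a \<in> (\<lambda>x. H #> x) ` S"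
      unfolding x(2) rc_inv[OF xc] .
    fix b assume "b \<in> (\<lambda>x. H #> x) ` S"
    then obtain y where y: "y \<in> S" "b = H #> y" by blast
    then have yc: "y \<in> carrier G" using Sc by blast
    have "H #> (x \<otimes> y) \<in> (\<lambda>x. H #> x) ` S"
      using subgroup.m_closed[OF assms(1) x(1) y(1)] by (rule imageI)
    then show "a \<otimes>\<^bsub>G Mod H\<^esub> b \<in> (\<lambda>x. H #> x) ` S"
      unfolding x(2) y(2) rc_mult[OF xc yc] .
  qed
qed

end


lemma (in group) gcancel1: "x \<in> carrier G \<Longrightarrow> y \<in> carrier G \<Longrightarrow> x \<otimes> (inv x \<otimes> y) = y"
  by (simp add: m_assoc[symmetric])
lemma (in group) gcancel2: "x \<in> carrier G \<Longrightarrow> y \<in> carrier G \<Longrightarrow> inv x \<otimes> (x \<otimes> y) = y"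
  by (simp add: m_assoc[symmetric])

context normal
begin

lemma Union_generate:
  assumes "S \<subseteq> carrier (G Mod H)"
  shows "\<Union>(generate (G Mod H) S) = generate G (H \<union> \<Union>S)"
proof -
  interpret Q: group "G Mod H" by (rule factorgroup_is_group)
  let ?T = "generate G (H \<union> \<Union>S)"
  have HS: "H \<union> \<Union>S \<subseteq> carrier G" using subset Union_sub_carrier[OF assms] by blast
  have Tsub: "subgroup ?T G" by (rule generate_is_subgroup[OF HS])
  have HT: "H \<subseteq> ?T" using generate.incl[of _ "H \<union> \<Union>S" G] by blast
  have ST: "\<Union>S \<subseteq> ?T" using generate.incl[of _ "H \<union> \<Union>S" G] by blast
  have gsub: "subgroup (generate (G Mod H) S) (G Mod H)" by (rule Q.generate_is_subgroup[OF assms])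
  have "S \<subseteq> (\<lambda>x. H #> x) ` ?T"
    using rc_image_Union[OF assms] ST by blast
  then have "generate (G Mod H) S \<subseteq> (\<lambda>x. H #> x) ` ?T"
    by (rule Q.generate_subgroup_incl[OF _ img_subgroup[OF Tsub HT]])
  then have 1: "\<Union>(generate (G Mod H) S) \<subseteq> ?T" using img_Union[OF Tsub HT] by blast
  have "S \<subseteq> generate (G Mod H) S" using generate.incl[of _ S "G Mod H"] by blast
  then have "H \<union> \<Union>S \<subseteq> \<Union>(generate (G Mod H) S)" using lift_subgroup(2)[OF gsub] by blast
  then have 2: "?T \<subseteq> \<Union>(generate (G Mod H) S)"
    by (rule generate_subgroup_incl[OF _ lift_subgroup(1)[OF gsub]])
  show ?thesis using 1 2 by blast
qed

lemma Union_Int: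
  assumes "A \<subseteq> carrier (G Mod H)" "B \<subseteq> carrier (G Mod H)"
  shows "\<Union>(A \<inter> B) = \<Union>A \<inter> \<Union>B"
proof
  show "\<Union>(A \<inter> B) \<subseteq> \<Union>A \<inter> \<Union>B" by blast
  show "\<Union>A \<inter> \<Union>B \<subseteq> \<Union>(A \<inter> B)"
  proof
    fix x assume x: "x \<in> \<Union>A \<inter> \<Union>B"
    then have xc: "x \<in> carrier G" using Union_sub_carrier[OF assms(1)] by blast
    have "H #> x \<in> A" "H #> x \<in> B" using x Union_rc_iff[OF assms(1) xc] Union_rc_iff[OF assms(2) xc] by auto
    then have "H #> x \<in> A \<inter> B" by blast
    then show "x \<in> \<Union>(A \<inter> B)" using Union_rc_iff[of "A \<inter> B" x] assms xc by blast
  qed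
qed

lemma prod_subgroup:
  assumes sP: "subgroup P G"
  shows "subgroup (P <#> H) G" "P \<subseteq> P <#> H" "H \<subseteq> P <#> H"
proof -
  have Pc: "P \<subseteq> carrier G" using sP subgroup.subset by blast
  show "P \<subseteq> P <#> H"
  proof
    fix x assume "x \<in> P"
    then have "x \<otimes> \<one> \<in> P <#> H" unfolding set_mult_def using subgroup.one_closed[OF subgroup_axioms] by blast
    then show "x \<in> P <#> H" using Pc \<open>x \<in> P\<close> by auto
  qed
  show "H \<subseteq> P <#> H"
  proof
    fix x assume "x \<in> H"
    then have "\<one> \<otimes> x \<in> P <#> H" unfolding set_mult_def using subgroup.one_closed[OF sP] by blast
    then show "x \<in> P <#> H" using subset \<open>x \<in> H\<close> by auto
  qed
  show "subgroup (P <#> H) G"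
  proof (rule subgroupI)
    show "P <#> H \<subseteq> carrier G" by (rule setmult_subset_G[OF Pc subset])
    have "\<one> \<otimes> \<one> \<in> P <#> H" unfolding set_mult_def
      using subgroup.one_closed[OF sP] subgroup.one_closed[OF subgroup_axioms] by blast
    then show "P <#> H \<noteq> {}" by (rule ne_helper)
    fix a assume "a \<in> P <#> H"
    then obtain x h where xh: "x \<in> P" "h \<in> H" "a = x \<otimes> h" unfolding set_mult_def by blast
    have xc: "x \<in> carrier G" using xh Pc by blast
    have hc: "h \<in> carrier G" using xh subset by blast
    have 1: "x \<otimes> inv h \<otimes> inv x \<in> H" using inv_op_closed2[OF xc subgroup.m_inv_closed[OF subgroup_axioms xh(2)]] .
    have 2: "inv x \<in> P" using subgroup.m_inv_closed[OF sP xh(1)] .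
    have "inv a = inv x \<otimes> (x \<otimes> inv h \<otimes> inv x)"
      using xc hc xh(3) by (simp add: inv_mult_group m_assoc gcancel2)
    then show "inv a \<in> P <#> H" unfolding set_mult_def using 1 2 by blast
    fix b assume "b \<in> P <#> H"
    then obtain y k where yk: "y \<in> P" "k \<in> H" "b = y \<otimes> k" unfolding set_mult_def by blast
    have yc: "y \<in> carrier G" using yk Pc by blast
    have kc: "k \<in> carrier G" using yk subset by blast
    have 3: "inv y \<otimes> h \<otimes> y \<otimes> k \<in> H"
      using subgroup.m_closed[OF subgroup_axioms inv_op_closed1[OF yc xh(2)] yk(2)] .
    have 4: "x \<otimes> y \<in> P" using subgroup.m_closed[OF sP xh(1) yk(1)] .
    have "a \<otimes> b = (x \<otimes> y) \<otimes> (inv y \<otimes> h \<otimes> y \<otimes> k)"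
      using xc hc yc kc xh(3) yk(3) by (simp add: m_assoc gcancel1)
    then show "a \<otimes> b \<in> P <#> H" unfolding set_mult_def using 3 4 by blast
  qed
qed

end


context normal
begin

lemma mod_up:
  assumes sA: "subgroup A (G Mod H)" and mM: "modular_subgroup G (\<Union>A)"
  shows "modular_subgroup (G Mod H) A"
proof -
  interpret Q: group "G Mod H" by (rule factorgroup_is_group)
  have Ac: "A \<subseteq> carrier (G Mod H)" using sA subgroup.subset by blast
  have sM: "subgroup (\<Union>A) G" and HM: "H \<subseteq> \<Union>A" using lift_subgroup[OF sA] by auto
  have m1: "\<And>U W. subgroup U G \<Longrightarrow> subgroup W G \<Longrightarrow> U \<subseteq> W \<Longrightarrow>
        generate G (U \<union> (\<Union>A \<inter> W)) = generate G (U \<union> \<Union>A) \<inter> W"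
   and m2: "\<And>V W. subgroup V G \<Longrightarrow> subgroup W G \<Longrightarrow> \<Union>A \<subseteq> W \<Longrightarrow>
        generate G (\<Union>A \<union> (V \<inter> W)) = generate G (\<Union>A \<union> V) \<inter> W"
    using mM unfolding modular_subgroup_def by auto
  show ?thesis
    unfolding modular_subgroup_def
  proof (intro conjI allI impI)
    show "subgroup A (G Mod H)" by fact
  next
    fix U W assume sU: "subgroup U (G Mod H)" and sW: "subgroup W (G Mod H)" and UW: "U \<subseteq> W"
    have Uc: "U \<subseteq> carrier (G Mod H)" using sU subgroup.subset by blast
    have Wc: "W \<subseteq> carrier (G Mod H)" using sW subgroup.subset by blast
    have HU: "H \<subseteq> \<Union>U" using lift_subgroup(2)[OF sU] .
    have c1: "generate (G Mod H) (U \<union> (A \<inter> W)) \<subseteq> carrier (G Mod H)"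
      by (rule Q.generate_incl) (use Uc Ac in blast)
    have c2: "generate (G Mod H) (U \<union> A) \<inter> W \<subseteq> carrier (G Mod H)"
      using Q.generate_incl[of "U \<union> A"] Uc Ac by blast
    have c3: "generate (G Mod H) (U \<union> A) \<subseteq> carrier (G Mod H)"
      using Q.generate_incl[of "U \<union> A"] Uc Ac by blast
    have "\<Union>(generate (G Mod H) (U \<union> (A \<inter> W))) = generate G (H \<union> \<Union>(U \<union> (A \<inter> W)))"
      by (rule Union_generate) (use Uc Ac in blast)
    also have "H \<union> \<Union>(U \<union> (A \<inter> W)) = \<Union>U \<union> (\<Union>A \<inter> \<Union>W)"
      using Union_Int[OF Ac Wc] HU by auto
    also have "generate G (\<Union>U \<union> (\<Union>A \<inter> \<Union>W)) = generate G (\<Union>U \<union> \<Union>A) \<inter> \<Union>W"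
      by (rule m1[OF lift_subgroup(1)[OF sU] lift_subgroup(1)[OF sW]]) (use UW in blast)
    also have "generate G (\<Union>U \<union> \<Union>A) = generate G (H \<union> \<Union>(U \<union> A))"
    proof -
      have "H \<union> \<Union>(U \<union> A) = \<Union>U \<union> \<Union>A" using HU by blast
      then show ?thesis by simp
    qed
    also have "\<dots> = \<Union>(generate (G Mod H) (U \<union> A))"
      by (rule Union_generate[symmetric]) (use Uc Ac in blast)
    also have "\<dots> \<inter> \<Union>W = \<Union>(generate (G Mod H) (U \<union> A) \<inter> W)"
      by (rule Union_Int[symmetric, OF c3 Wc])
    finally show "generate (G Mod H) (U \<union> (A \<inter> W)) = generate (G Mod H) (U \<union> A) \<inter> W"
      by (rule Union_inj[OF c1 c2])
  next
    fix V W assume sV: "subgroup V (G Mod H)" and sW: "subgroup W (G Mod H)" and AW: "A \<subseteq> W"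
    have Vc: "V \<subseteq> carrier (G Mod H)" using sV subgroup.subset by blast
    have Wc: "W \<subseteq> carrier (G Mod H)" using sW subgroup.subset by blast
    have c1: "generate (G Mod H) (A \<union> (V \<inter> W)) \<subseteq> carrier (G Mod H)"
      by (rule Q.generate_incl) (use Vc Ac in blast)
    have c2: "generate (G Mod H) (A \<union> V) \<inter> W \<subseteq> carrier (G Mod H)"
      using Q.generate_incl[of "A \<union> V"] Vc Ac by blast
    have c3: "generate (G Mod H) (A \<union> V) \<subseteq> carrier (G Mod H)"
      using Q.generate_incl[of "A \<union> V"] Vc Ac by blast
    have "\<Union>(generate (G Mod H) (A \<union> (V \<inter> W))) = generate G (H \<union> \<Union>(A \<union> (V \<inter> W)))"
      by (rule Union_generate) (use Vc Ac in blast)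
    also have "H \<union> \<Union>(A \<union> (V \<inter> W)) = \<Union>A \<union> (\<Union>V \<inter> \<Union>W)"
      using Union_Int[OF Vc Wc] HM by auto
    also have "generate G (\<Union>A \<union> (\<Union>V \<inter> \<Union>W)) = generate G (\<Union>A \<union> \<Union>V) \<inter> \<Union>W"
      by (rule m2[OF lift_subgroup(1)[OF sV] lift_subgroup(1)[OF sW]]) (use AW in blast)
    also have "generate G (\<Union>A \<union> \<Union>V) = generate G (H \<union> \<Union>(A \<union> V))"
    proof -
      have "H \<union> \<Union>(A \<union> V) = \<Union>A \<union> \<Union>V" using HM by blast
      then show ?thesis by simp
    qed
    also have "\<dots> = \<Union>(generate (G Mod H) (A \<union> V))"
      by (rule Union_generate[symmetric]) (use Vc Ac in blast)
    also have "\<dots> \<inter> \<Union>W = \<Union>(generate (G Mod H) (A \<union> V) \<inter> W)"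
      by (rule Union_Int[symmetric, OF c3 Wc])
    finally show "generate (G Mod H) (A \<union> (V \<inter> W)) = generate (G Mod H) (A \<union> V) \<inter> W"
      by (rule Union_inj[OF c1 c2])
  qed
qed

end


context normal
begin

lemma mod_down:
  assumes sA: "subgroup A (G Mod H)" and mA: "modular_subgroup (G Mod H) A"
  shows "modular_subgroup G (\<Union>A)"
proof -
  interpret Q: group "G Mod H" by (rule factorgroup_is_group)
  have Ac: "A \<subseteq> carrier (G Mod H)" using sA subgroup.subset by blast
  have sM: "subgroup (\<Union>A) G" and HM: "H \<subseteq> \<Union>A" using lift_subgroup[OF sA] by auto
  have Mc: "\<Union>A \<subseteq> carrier G" using sM subgroup.subset by blast
  have Aimg: "A = (\<lambda>x. H #> x) ` \<Union>A" by (rule rc_image_Union[OF Ac])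
  have m1: "\<And>U W. subgroup U (G Mod H) \<Longrightarrow> subgroup W (G Mod H) \<Longrightarrow> U \<subseteq> W \<Longrightarrow>
        generate (G Mod H) (U \<union> (A \<inter> W)) = generate (G Mod H) (U \<union> A) \<inter> W"
   and m2: "\<And>V W. subgroup V (G Mod H) \<Longrightarrow> subgroup W (G Mod H) \<Longrightarrow> A \<subseteq> W \<Longrightarrow>
        generate (G Mod H) (A \<union> (V \<inter> W)) = generate (G Mod H) (A \<union> V) \<inter> W"
    using mA unfolding modular_subgroup_def by auto
  show ?thesis
    unfolding modular_subgroup_def
  proof (intro conjI allI impI)
    show "subgroup (\<Union>A) G" by fact
  next
    fix P Z assume sP: "subgroup P G" and sZ: "subgroup Z G" and PZ: "P \<subseteq> Z"
    have Pc: "P \<subseteq> carrier G" using sP subgroup.subset by blast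
    have Zc: "Z \<subseteq> carrier G" using sZ subgroup.subset by blast
    let ?T = "generate G (P \<union> (\<Union>A \<inter> Z))"
    have sT: "subgroup ?T G" by (rule generate_is_subgroup) (use Pc Mc in blast)
    have TZ: "?T \<subseteq> Z" by (rule generate_subgroup_incl[OF _ sZ]) (use PZ in blast)
    have PT: "P \<subseteq> ?T" and MZT: "\<Union>A \<inter> Z \<subseteq> ?T" using generate.incl[of _ "P \<union> (\<Union>A \<inter> Z)" G] by blast+
    have T1: "?T \<subseteq> generate G (P \<union> \<Union>A)" by (rule mono_generate) blast
    have T2: "generate G (P \<union> \<Union>A) \<inter> Z \<subseteq> ?T"
    proof
      fix g assume g: "g \<in> generate G (P \<union> \<Union>A) \<inter> Z"
      have gc: "g \<in> carrier G" using g Zc by blast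
      let ?PH = "P <#> H" and ?ZH = "Z <#> H"
      note sPH = prod_subgroup[OF sP] and sZH = prod_subgroup[OF sZ]
      have PHZH: "?PH \<subseteq> ?ZH" by (rule mono_set_mult[OF PZ]) blast
      let ?P' = "(\<lambda>x. H #> x) ` ?PH" and ?Z' = "(\<lambda>x. H #> x) ` ?ZH"
      have sP': "subgroup ?P' (G Mod H)" by (rule img_subgroup[OF sPH(1) sPH(3)])
      have sZ': "subgroup ?Z' (G Mod H)" by (rule img_subgroup[OF sZH(1) sZH(3)])
      have P'c: "?P' \<subseteq> carrier (G Mod H)" using sP' subgroup.subset by blast
      have Z'c: "?Z' \<subseteq> carrier (G Mod H)" using sZ' subgroup.subset by blast
      have UP': "\<Union>?P' = ?PH" by (rule img_Union[OF sPH(1) sPH(3)])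
      have UZ': "\<Union>?Z' = ?ZH" by (rule img_Union[OF sZH(1) sZH(3)])
      have eq: "generate (G Mod H) (?P' \<union> (A \<inter> ?Z')) = generate (G Mod H) (?P' \<union> A) \<inter> ?Z'"
        by (rule m1[OF sP' sZ']) (use PHZH in blast)
      have c3: "generate (G Mod H) (?P' \<union> A) \<subseteq> carrier (G Mod H)"
        using Q.generate_incl[of "?P' \<union> A"] P'c Ac by blast
      have "generate G (H \<union> \<Union>(?P' \<union> (A \<inter> ?Z'))) = \<Union>(generate (G Mod H) (?P' \<union> (A \<inter> ?Z')))"
        by (rule Union_generate[symmetric]) (use P'c Ac in blast)
      also have "\<dots> = \<Union>(generate (G Mod H) (?P' \<union> A) \<inter> ?Z')" using eq by simp
      also have "\<dots> = \<Union>(generate (G Mod H) (?P' \<union> A)) \<inter> ?ZH"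
        using Union_Int[OF c3 Z'c] UZ' by simp
      also have "\<Union>(generate (G Mod H) (?P' \<union> A)) = generate G (H \<union> \<Union>(?P' \<union> A))"
        by (rule Union_generate) (use P'c Ac in blast)
      finally have eq2: "generate G (H \<union> (?PH \<union> (\<Union>A \<inter> ?ZH))) = generate G (H \<union> (?PH \<union> \<Union>A)) \<inter> ?ZH"
        using Union_Int[OF Ac Z'c] UP' UZ' by simp
      have "generate G (P \<union> \<Union>A) \<subseteq> generate G (H \<union> (?PH \<union> \<Union>A))"
        by (rule mono_generate) (use sPH(2) in blast)
      moreover have "Z \<subseteq> ?ZH" by (rule sZH(2))
      ultimately have g2: "g \<in> generate G (H \<union> (?PH \<union> (\<Union>A \<inter> ?ZH)))" using g eq2 by blast
      note sTH = prod_subgroup[OF sT]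
      have "H \<union> (?PH \<union> (\<Union>A \<inter> ?ZH)) \<subseteq> ?T <#> H"
      proof -
        have "?PH \<subseteq> ?T <#> H" by (rule mono_set_mult[OF PT]) blast
        moreover have "\<Union>A \<inter> ?ZH \<subseteq> ?T <#> H"
        proof
          fix m assume m: "m \<in> \<Union>A \<inter> ?ZH"
          then obtain z h where zh: "z \<in> Z" "h \<in> H" "m = z \<otimes> h" unfolding set_mult_def by blast
          have zc: "z \<in> carrier G" using zh Zc by blast
          have hc: "h \<in> carrier G" using zh subset by blast
          have "z = m \<otimes> inv h" using zh zc hc by (simp add: m_assoc)
          moreover have "m \<otimes> inv h \<in> \<Union>A"
            using m HM zh(2) subgroup.m_closed[OF sM] subgroup.m_inv_closed[OF sM] by blast
          ultimately have "z \<in> \<Union>A \<inter> Z" using zh by blast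
          then have "z \<in> ?T" using MZT by blast
          then show "m \<in> ?T <#> H" unfolding set_mult_def using zh by blast
        qed
        ultimately show ?thesis using sTH(3) by blast
      qed
      then have "generate G (H \<union> (?PH \<union> (\<Union>A \<inter> ?ZH))) \<subseteq> ?T <#> H"
        by (rule generate_subgroup_incl[OF _ sTH(1)])
      with g2 have "g \<in> ?T <#> H" by blast
      then obtain t h where th: "t \<in> ?T" "h \<in> H" "g = t \<otimes> h" unfolding set_mult_def by blast
      have tc: "t \<in> carrier G" using th sT subgroup.subset by blast
      have hc: "h \<in> carrier G" using th subset by blast
      have "h = inv t \<otimes> g" using th tc hc by (simp add: gcancel2)
      moreover have "inv t \<otimes> g \<in> Z" using g th(1) TZ subgroup.m_closed[OF sZ] subgroup.m_inv_closed[OF sZ] by blast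
      ultimately have "h \<in> \<Union>A \<inter> Z" using th(2) HM by blast
      then have "h \<in> ?T" using MZT by blast
      then show "g \<in> ?T" using th subgroup.m_closed[OF sT] by blast
    qed
    show "?T = generate G (P \<union> \<Union>A) \<inter> Z" using T1 T2 TZ by blast
  next
    fix V Z assume sV: "subgroup V G" and sZ: "subgroup Z G" and MZ: "\<Union>A \<subseteq> Z"
    have Vc: "V \<subseteq> carrier G" using sV subgroup.subset by blast
    have Zc: "Z \<subseteq> carrier G" using sZ subgroup.subset by blast
    let ?T = "generate G (\<Union>A \<union> (V \<inter> Z))"
    have sT: "subgroup ?T G" by (rule generate_is_subgroup) (use Vc Mc in blast)
    have TZ: "?T \<subseteq> Z" by (rule generate_subgroup_incl[OF _ sZ]) (use MZ in blast)
    have MT: "\<Union>A \<subseteq> ?T" and VZT: "V \<inter> Z \<subseteq> ?T" using generate.incl[of _ "\<Union>A \<union> (V \<inter> Z)" G] by blast+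
    have T1: "?T \<subseteq> generate G (\<Union>A \<union> V)" by (rule mono_generate) blast
    have T2: "generate G (\<Union>A \<union> V) \<inter> Z \<subseteq> ?T"
    proof
      fix g assume g: "g \<in> generate G (\<Union>A \<union> V) \<inter> Z"
      let ?VH = "V <#> H"
      note sVH = prod_subgroup[OF sV]
      have HZ: "H \<subseteq> Z" using HM MZ by blast
      let ?V' = "(\<lambda>x. H #> x) ` ?VH" and ?Z' = "(\<lambda>x. H #> x) ` Z"
      have sV': "subgroup ?V' (G Mod H)" by (rule img_subgroup[OF sVH(1) sVH(3)])
      have sZ': "subgroup ?Z' (G Mod H)" by (rule img_subgroup[OF sZ HZ])
      have V'c: "?V' \<subseteq> carrier (G Mod H)" using sV' subgroup.subset by blast
      have Z'c: "?Z' \<subseteq> carrier (G Mod H)" using sZ' subgroup.subset by blast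
      have UV': "\<Union>?V' = ?VH" by (rule img_Union[OF sVH(1) sVH(3)])
      have UZ': "\<Union>?Z' = Z" by (rule img_Union[OF sZ HZ])
      have AZ': "A \<subseteq> ?Z'" using Aimg MZ by blast
      have eq: "generate (G Mod H) (A \<union> (?V' \<inter> ?Z')) = generate (G Mod H) (A \<union> ?V') \<inter> ?Z'"
        by (rule m2[OF sV' sZ' AZ'])
      have c3: "generate (G Mod H) (A \<union> ?V') \<subseteq> carrier (G Mod H)"
        using Q.generate_incl[of "A \<union> ?V'"] V'c Ac by blast
      have "generate G (H \<union> \<Union>(A \<union> (?V' \<inter> ?Z'))) = \<Union>(generate (G Mod H) (A \<union> (?V' \<inter> ?Z')))"
        by (rule Union_generate[symmetric]) (use V'c Ac in blast)
      also have "\<dots> = \<Union>(generate (G Mod H) (A \<union> ?V') \<inter> ?Z')" using eq by simp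
      also have "\<dots> = \<Union>(generate (G Mod H) (A \<union> ?V')) \<inter> Z"
        using Union_Int[OF c3 Z'c] UZ' by simp
      also have "\<Union>(generate (G Mod H) (A \<union> ?V')) = generate G (H \<union> \<Union>(A \<union> ?V'))"
        by (rule Union_generate) (use V'c Ac in blast)
      finally have eq2: "generate G (H \<union> (\<Union>A \<union> (?VH \<inter> Z))) = generate G (H \<union> (\<Union>A \<union> ?VH)) \<inter> Z"
        using Union_Int[OF V'c Z'c] UV' UZ' by simp
      have "generate G (\<Union>A \<union> V) \<subseteq> generate G (H \<union> (\<Union>A \<union> ?VH))"
        by (rule mono_generate) (use sVH(2) in blast)
      then have g2: "g \<in> generate G (H \<union> (\<Union>A \<union> (?VH \<inter> Z)))" using g eq2 by blast
      have "H \<union> (\<Union>A \<union> (?VH \<inter> Z)) \<subseteq> ?T"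
      proof -
        have "?VH \<inter> Z \<subseteq> ?T"
        proof
          fix m assume m: "m \<in> ?VH \<inter> Z"
          then obtain v h where vh: "v \<in> V" "h \<in> H" "m = v \<otimes> h" unfolding set_mult_def by blast
          have vc: "v \<in> carrier G" using vh Vc by blast
          have hc: "h \<in> carrier G" using vh subset by blast
          have "v = m \<otimes> inv h" using vh vc hc by (simp add: m_assoc)
          moreover have "m \<otimes> inv h \<in> Z"
            using m HZ vh(2) subgroup.m_closed[OF sZ] subgroup.m_inv_closed[OF sZ] by blast
          ultimately have "v \<in> V \<inter> Z" using vh by blast
          then have "v \<in> ?T" using VZT by blast
          moreover have "h \<in> ?T" using vh(2) HM MT by blast
          ultimately show "m \<in> ?T" using vh(3) subgroup.m_closed[OF sT] by blast
        qed
        then show ?thesis using HM MT by blast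
      qed
      then have "generate G (H \<union> (\<Union>A \<union> (?VH \<inter> Z))) \<subseteq> ?T"
        by (rule generate_subgroup_incl[OF _ sT])
      with g2 show "g \<in> ?T" by blast
    qed
    show "?T = generate G (\<Union>A \<union> V) \<inter> Z" using T1 T2 TZ by blast
  qed
qed

end


lemma (in group) conj_mem_iff:
  assumes "A \<subseteq> carrier G" "g \<in> carrier G"
  shows "x \<in> (g <# A) #> inv g \<longleftrightarrow> x \<in> carrier G \<and> inv g \<otimes> x \<otimes> g \<in> A"
proof
  assume "x \<in> (g <# A) #> inv g"
  then obtain a where a: "a \<in> A" "x = g \<otimes> a \<otimes> inv g" unfolding l_coset_def r_coset_def by blast
  have ac: "a \<in> carrier G" using a assms by blast
  have "inv g \<otimes> x \<otimes> g = a" using a(2) ac assms(2) by (simp add: m_assoc gcancel2)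
  then show "x \<in> carrier G \<and> inv g \<otimes> x \<otimes> g \<in> A" using a ac assms(2) by simp
next
  assume x: "x \<in> carrier G \<and> inv g \<otimes> x \<otimes> g \<in> A"
  have "x = g \<otimes> (inv g \<otimes> x \<otimes> g) \<otimes> inv g" using x assms(2) by (simp add: m_assoc gcancel1)
  then show "x \<in> (g <# A) #> inv g" unfolding l_coset_def r_coset_def using x by blast
qed

lemma (in group) core_char:
  assumes "A \<subseteq> carrier G"
  shows "core G A = {x \<in> carrier G. \<forall>g\<in>carrier G. inv g \<otimes> x \<otimes> g \<in> A}"
proof -
  have "\<And>x. x \<in> core G A \<longleftrightarrow> (\<forall>g\<in>carrier G. x \<in> (g <# A) #> inv g)"
    unfolding core_def by blast
  also have "\<And>x. (\<forall>g\<in>carrier G. x \<in> (g <# A) #> inv g) \<longleftrightarrow> (x \<in> carrier G \<and> (\<forall>g\<in>carrier G. inv g \<otimes> x \<otimes> g \<in> A))"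
    using conj_mem_iff[OF assms] one_closed by blast
  finally show ?thesis by blast
qed

lemma (in group) core_subgroup:
  assumes sA: "subgroup A G"
  shows "subgroup (core G A) G"
proof -
  have Ac: "A \<subseteq> carrier G" using sA subgroup.subset by blast
  show ?thesis unfolding core_char[OF Ac]
  proof (rule subgroupI)
    show "{x \<in> carrier G. \<forall>g\<in>carrier G. inv g \<otimes> x \<otimes> g \<in> A} \<subseteq> carrier G" by blast
    have "\<one> \<in> {x \<in> carrier G. \<forall>g\<in>carrier G. inv g \<otimes> x \<otimes> g \<in> A}"
      using subgroup.one_closed[OF sA] by simp
    then show "{x \<in> carrier G. \<forall>g\<in>carrier G. inv g \<otimes> x \<otimes> g \<in> A} \<noteq> {}" by (rule ne_helper)
    fix a assume a: "a \<in> {x \<in> carrier G. \<forall>g\<in>carrier G. inv g \<otimes> x \<otimes> g \<in> A}"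
    have "\<forall>g\<in>carrier G. inv g \<otimes> inv a \<otimes> g \<in> A"
    proof
      fix g assume g: "g \<in> carrier G"
      have "inv g \<otimes> inv a \<otimes> g = inv (inv g \<otimes> a \<otimes> g)" using a g by (simp add: inv_mult_group m_assoc)
      then show "inv g \<otimes> inv a \<otimes> g \<in> A" using a g subgroup.m_inv_closed[OF sA] by simp
    qed
    then show "inv a \<in> {x \<in> carrier G. \<forall>g\<in>carrier G. inv g \<otimes> x \<otimes> g \<in> A}" using a by simp
    fix b assume b: "b \<in> {x \<in> carrier G. \<forall>g\<in>carrier G. inv g \<otimes> x \<otimes> g \<in> A}"
    have "\<forall>g\<in>carrier G. inv g \<otimes> (a \<otimes> b) \<otimes> g \<in> A"
    proof
      fix g assume g: "g \<in> carrier G"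
      have "inv g \<otimes> (a \<otimes> b) \<otimes> g = (inv g \<otimes> a \<otimes> g) \<otimes> (inv g \<otimes> b \<otimes> g)" using a b g by (simp add: m_assoc gcancel1)
      then show "inv g \<otimes> (a \<otimes> b) \<otimes> g \<in> A" using a b g subgroup.m_closed[OF sA] by simp
    qed
    then show "a \<otimes> b \<in> {x \<in> carrier G. \<forall>g\<in>carrier G. inv g \<otimes> x \<otimes> g \<in> A}" using a b by simp
  qed
qed

context normal
begin

lemma card_Union_rc:
  assumes fin: "finite (carrier G)" and Y: "Y \<subseteq> carrier (G Mod H)"
  shows "card (\<Union>Y) = card Y * card H"
proof -
  have Yr: "Y \<subseteq> rcosets H" using Y by (simp add: FactGroup_def)
  have fU: "finite (\<Union>Y)" using Union_sub_carrier[OF Y] fin finite_subset by blast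
  have fY: "finite Y" using fU by (rule finite_UnionD)
  have "card H * card Y = card (\<Union>Y)"
  proof (rule card_partition[OF fY fU])
    show "\<And>c. c \<in> Y \<Longrightarrow> card c = card H" using Yr card_rcosets_equal[OF _ subset] by auto
    show "\<And>c1 c2. c1 \<in> Y \<Longrightarrow> c2 \<in> Y \<Longrightarrow> c1 \<noteq> c2 \<Longrightarrow> c1 \<inter> c2 = {}"
      using rcos_disjoint[OF subgroup_axioms] Yr unfolding pairwise_def disjnt_def by blast
  qed
  then show ?thesis by (simp add: mult.commute)
qed

end


lemma sigma_primary_order:
  "order K1 = order K2 \<Longrightarrow> sigma_primary S K1 = sigma_primary S K2"
  unfolding sigma_primary_def pi_group_def by simp

context normal
begin

lemma normal_step:
  assumes sB': "subgroup B' (G Mod H)" and sA': "subgroup A' (G Mod H)" and AB: "A' \<subseteq> B'"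
    and nrm: "A' \<lhd> (G Mod H)\<lparr>carrier := B'\<rparr>"
  shows "\<Union>A' \<lhd> G\<lparr>carrier := \<Union>B'\<rparr>"
proof -
  interpret Q: group "G Mod H" by (rule factorgroup_is_group)
  have sB: "subgroup (\<Union>B') G" using lift_subgroup(1)[OF sB'] .
  have sA: "subgroup (\<Union>A') G" using lift_subgroup(1)[OF sA'] .
  have B'c: "B' \<subseteq> carrier (G Mod H)" using sB' subgroup.subset by blast
  have A'c: "A' \<subseteq> carrier (G Mod H)" using sA' subgroup.subset by blast
  interpret GB: group "G\<lparr>carrier := \<Union>B'\<rparr>" by (rule subgroup_imp_group[OF sB])
  show ?thesis
  proof (rule GB.normal_invI)
    show "subgroup (\<Union>A') (G\<lparr>carrier := \<Union>B'\<rparr>)" by (rule subgroup_incl[OF sA sB]) (use AB in blast)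
    fix x h assume x: "x \<in> carrier (G\<lparr>carrier := \<Union>B'\<rparr>)" and h: "h \<in> \<Union>A'"
    have xB: "x \<in> \<Union>B'" using x by simp
    have xc: "x \<in> carrier G" using xB Union_sub_carrier[OF B'c] by blast
    have hc: "h \<in> carrier G" using h Union_sub_carrier[OF A'c] by blast
    have xB': "H #> x \<in> B'" using Union_rc_iff[OF B'c xc] xB by blast
    have hA': "H #> h \<in> A'" using Union_rc_iff[OF A'c hc] h by blast
    have "(H #> x) \<otimes>\<^bsub>(G Mod H)\<lparr>carrier := B'\<rparr>\<^esub> (H #> h) \<otimes>\<^bsub>(G Mod H)\<lparr>carrier := B'\<rparr>\<^esub> inv\<^bsub>(G Mod H)\<lparr>carrier := B'\<rparr>\<^esub> (H #> x) \<in> A'"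
      by (rule normal.inv_op_closed2[OF nrm]) (use xB' hA' in simp_all)
    moreover have "inv\<^bsub>(G Mod H)\<lparr>carrier := B'\<rparr>\<^esub> (H #> x) = inv\<^bsub>G Mod H\<^esub> (H #> x)"
      by (rule Q.m_inv_consistent[OF sB' xB'])
    ultimately have "(H #> x) \<otimes>\<^bsub>G Mod H\<^esub> (H #> h) \<otimes>\<^bsub>G Mod H\<^esub> inv\<^bsub>G Mod H\<^esub> (H #> x) \<in> A'"
      by simp
    then have "H #> (x \<otimes> h \<otimes> inv x) \<in> A'" using xc hc by (simp add: rc_inv rcos_sum)
    then have "x \<otimes> h \<otimes> inv x \<in> \<Union>A'" using Union_rc_iff[OF A'c] xc hc by simp
    then show "x \<otimes>\<^bsub>G\<lparr>carrier := \<Union>B'\<rparr>\<^esub> h \<otimes>\<^bsub>G\<lparr>carrier := \<Union>B'\<rparr>\<^esub> inv\<^bsub>G\<lparr>carrier := \<Union>B'\<rparr>\<^esub> x \<in> \<Union>A'"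
      using m_inv_consistent[OF sB xB] by simp
  qed
qed

end


lemma ball_img_helper: "B = f ` C \<Longrightarrow> (\<forall>z\<in>B. P z) \<longleftrightarrow> (\<forall>g\<in>C. P (f g))" by blast

context normal
begin

lemma core_step:
  assumes sB': "subgroup B' (G Mod H)" and sA': "subgroup A' (G Mod H)" and AB: "A' \<subseteq> B'"
  shows "core (G\<lparr>carrier := \<Union>B'\<rparr>) (\<Union>A') = \<Union>(core ((G Mod H)\<lparr>carrier := B'\<rparr>) A')"
proof -
  interpret Q: group "G Mod H" by (rule factorgroup_is_group)
  have sB: "subgroup (\<Union>B') G" using lift_subgroup(1)[OF sB'] .
  have sA: "subgroup (\<Union>A') G" using lift_subgroup(1)[OF sA'] .
  have B'c: "B' \<subseteq> carrier (G Mod H)" using sB' subgroup.subset by blast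
  have A'c: "A' \<subseteq> carrier (G Mod H)" using sA' subgroup.subset by blast
  interpret GB: group "G\<lparr>carrier := \<Union>B'\<rparr>" by (rule subgroup_imp_group[OF sB])
  interpret QB: group "(G Mod H)\<lparr>carrier := B'\<rparr>" by (rule Q.subgroup_imp_group[OF sB'])
  have c1: "core (G\<lparr>carrier := \<Union>B'\<rparr>) (\<Union>A') = {x \<in> \<Union>B'. \<forall>g\<in>\<Union>B'. inv\<^bsub>G\<lparr>carrier := \<Union>B'\<rparr>\<^esub> g \<otimes> x \<otimes> g \<in> \<Union>A'}"
    using GB.core_char[of "\<Union>A'"] AB by auto
  have c2: "core ((G Mod H)\<lparr>carrier := B'\<rparr>) A' = {y \<in> B'. \<forall>z\<in>B'. inv\<^bsub>(G Mod H)\<lparr>carrier := B'\<rparr>\<^esub> z \<otimes>\<^bsub>G Mod H\<^esub> y \<otimes>\<^bsub>G Mod H\<^esub> z \<in> A'}"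
    using QB.core_char[of A'] AB by auto
  have key: "\<And>x g. x \<in> carrier G \<Longrightarrow> g \<in> \<Union>B' \<Longrightarrow>
      (inv\<^bsub>(G Mod H)\<lparr>carrier := B'\<rparr>\<^esub> (H #> g) \<otimes>\<^bsub>G Mod H\<^esub> (H #> x) \<otimes>\<^bsub>G Mod H\<^esub> (H #> g) \<in> A')
      \<longleftrightarrow> (inv\<^bsub>G\<lparr>carrier := \<Union>B'\<rparr>\<^esub> g \<otimes> x \<otimes> g \<in> \<Union>A')"
  proof -
    fix x g assume xc: "x \<in> carrier G" and gB: "g \<in> \<Union>B'"
    have gc: "g \<in> carrier G" using gB Union_sub_carrier[OF B'c] by blast
    have gB': "H #> g \<in> B'" using Union_rc_iff[OF B'c gc] gB by blast
    have "inv\<^bsub>(G Mod H)\<lparr>carrier := B'\<rparr>\<^esub> (H #> g) = H #> inv g"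
      using Q.m_inv_consistent[OF sB' gB'] rc_inv[OF gc] by simp
    moreover have "inv\<^bsub>G\<lparr>carrier := \<Union>B'\<rparr>\<^esub> g = inv g" by (rule m_inv_consistent[OF sB gB])
    ultimately show "(inv\<^bsub>(G Mod H)\<lparr>carrier := B'\<rparr>\<^esub> (H #> g) \<otimes>\<^bsub>G Mod H\<^esub> (H #> x) \<otimes>\<^bsub>G Mod H\<^esub> (H #> g) \<in> A')
      \<longleftrightarrow> (inv\<^bsub>G\<lparr>carrier := \<Union>B'\<rparr>\<^esub> g \<otimes> x \<otimes> g \<in> \<Union>A')"
      using Union_rc_iff[OF A'c, of "inv g \<otimes> x \<otimes> g"] xc gc by (simp add: rcos_sum)
  qed
  have C'c: "core ((G Mod H)\<lparr>carrier := B'\<rparr>) A' \<subseteq> carrier (G Mod H)" using c2 B'c by blast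
  have "x \<in> core (G\<lparr>carrier := \<Union>B'\<rparr>) (\<Union>A') \<longleftrightarrow> x \<in> \<Union>(core ((G Mod H)\<lparr>carrier := B'\<rparr>) A')" for x
  proof -
    show "x \<in> core (G\<lparr>carrier := \<Union>B'\<rparr>) (\<Union>A') \<longleftrightarrow> x \<in> \<Union>(core ((G Mod H)\<lparr>carrier := B'\<rparr>) A')"
    proof (cases "x \<in> carrier G")
      case False
      then show ?thesis using Union_sub_carrier[OF C'c] Union_sub_carrier[OF B'c] c1 by blast
    next
      case xc: True
      have "x \<in> \<Union>(core ((G Mod H)\<lparr>carrier := B'\<rparr>) A') \<longleftrightarrow> H #> x \<in> core ((G Mod H)\<lparr>carrier := B'\<rparr>) A'"
        by (rule Union_rc_iff[OF C'c xc])
      also have "\<dots> \<longleftrightarrow> H #> x \<in> B' \<and> (\<forall>z\<in>B'. inv\<^bsub>(G Mod H)\<lparr>carrier := B'\<rparr>\<^esub> z \<otimes>\<^bsub>G Mod H\<^esub> (H #> x) \<otimes>\<^bsub>G Mod H\<^esub> z \<in> A')"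
        using c2 by simp
      also have "(\<forall>z\<in>B'. inv\<^bsub>(G Mod H)\<lparr>carrier := B'\<rparr>\<^esub> z \<otimes>\<^bsub>G Mod H\<^esub> (H #> x) \<otimes>\<^bsub>G Mod H\<^esub> z \<in> A')
          \<longleftrightarrow> (\<forall>g\<in>\<Union>B'. inv\<^bsub>(G Mod H)\<lparr>carrier := B'\<rparr>\<^esub> (H #> g) \<otimes>\<^bsub>G Mod H\<^esub> (H #> x) \<otimes>\<^bsub>G Mod H\<^esub> (H #> g) \<in> A')"
        by (rule ball_img_helper[where f="\<lambda>x. H #> x", OF rc_image_Union[OF B'c]])
      also have "\<dots> \<longleftrightarrow> (\<forall>g\<in>\<Union>B'. inv\<^bsub>G\<lparr>carrier := \<Union>B'\<rparr>\<^esub> g \<otimes> x \<otimes> g \<in> \<Union>A')"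
        using key xc by blast
      also have "H #> x \<in> B' \<longleftrightarrow> x \<in> \<Union>B'" using Union_rc_iff[OF B'c xc] by simp
      finally show ?thesis using c1 by blast
    qed
  qed
  then show ?thesis by blast
qed

end


lemma arith_helper:
  assumes "(r::nat) * C = B * h" "r' * c = B" "C = c * h" "c > 0" "h > 0"
  shows "r = r'"
proof -
  have "r * (c * h) = B * h" using assms(1,3) by simp
  also have "\<dots> = r' * (c * h)" using assms(2) by (simp add: mult.assoc)
  finally have "r * (c * h) = r' * (c * h)" .
  moreover have "c * h \<noteq> 0" using assms(4,5) by simp
  ultimately show ?thesis by simp
qed

context normal
begin

lemma order_step:
  assumes fin: "finite (carrier G)"
    and sB': "subgroup B' (G Mod H)" and sA': "subgroup A' (G Mod H)" and AB: "A' \<subseteq> B'"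
  shows "order ((G\<lparr>carrier := \<Union>B'\<rparr>) Mod core (G\<lparr>carrier := \<Union>B'\<rparr>) (\<Union>A'))
       = order (((G Mod H)\<lparr>carrier := B'\<rparr>) Mod core ((G Mod H)\<lparr>carrier := B'\<rparr>) A')"
proof -
  interpret Q: group "G Mod H" by (rule factorgroup_is_group)
  have sB: "subgroup (\<Union>B') G" using lift_subgroup(1)[OF sB'] .
  have sA: "subgroup (\<Union>A') G" using lift_subgroup(1)[OF sA'] .
  have B'c: "B' \<subseteq> carrier (G Mod H)" using sB' subgroup.subset by blast
  interpret GB: group "G\<lparr>carrier := \<Union>B'\<rparr>" by (rule subgroup_imp_group[OF sB])
  interpret QB: group "(G Mod H)\<lparr>carrier := B'\<rparr>" by (rule Q.subgroup_imp_group[OF sB'])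
  let ?C' = "core ((G Mod H)\<lparr>carrier := B'\<rparr>) A'"
  let ?C = "core (G\<lparr>carrier := \<Union>B'\<rparr>) (\<Union>A')"
  have sA'B: "subgroup A' ((G Mod H)\<lparr>carrier := B'\<rparr>)" by (rule Q.subgroup_incl[OF sA' sB' AB])
  have sC': "subgroup ?C' ((G Mod H)\<lparr>carrier := B'\<rparr>)" by (rule QB.core_subgroup[OF sA'B])
  have sAB: "subgroup (\<Union>A') (G\<lparr>carrier := \<Union>B'\<rparr>)" by (rule subgroup_incl[OF sA sB]) (use AB in blast)
  have sC: "subgroup ?C (G\<lparr>carrier := \<Union>B'\<rparr>)" by (rule GB.core_subgroup[OF sAB])
  have CC': "?C = \<Union>?C'" by (rule core_step[OF sB' sA' AB])
  have C'c: "?C' \<subseteq> carrier (G Mod H)" using sC' subgroup.subset B'c by fastforce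
  have L1: "card (rcosets\<^bsub>G\<lparr>carrier := \<Union>B'\<rparr>\<^esub> ?C) * card ?C = order (G\<lparr>carrier := \<Union>B'\<rparr>)"
    by (rule GB.lagrange[OF sC])
  have L2: "card (rcosets\<^bsub>(G Mod H)\<lparr>carrier := B'\<rparr>\<^esub> ?C') * card ?C' = order ((G Mod H)\<lparr>carrier := B'\<rparr>)"
    by (rule QB.lagrange[OF sC'])
  have oB: "order (G\<lparr>carrier := \<Union>B'\<rparr>) = card B' * card H"
    using card_Union_rc[OF fin B'c] by (simp add: order_def)
  have oB': "order ((G Mod H)\<lparr>carrier := B'\<rparr>) = card B'" by (simp add: order_def)
  have cC: "card ?C = card ?C' * card H" using CC' card_Union_rc[OF fin C'c] by simp
  have finQ: "finite (carrier (G Mod H))" using fin carrier_FactGroup[of G H] by simp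
  have "finite ?C'" using C'c finQ finite_subset by blast
  moreover have "?C' \<noteq> {}" using subgroup.one_closed[OF sC'] by blast
  ultimately have pC': "card ?C' > 0" by (simp add: card_gt_0_iff)
  have "finite H" using fin subset finite_subset by blast
  moreover have "H \<noteq> {}" using subgroup.one_closed[OF subgroup_axioms] by blast
  ultimately have pH: "card H > 0" by (simp add: card_gt_0_iff)
  have "card (rcosets\<^bsub>G\<lparr>carrier := \<Union>B'\<rparr>\<^esub> ?C) = card (rcosets\<^bsub>(G Mod H)\<lparr>carrier := B'\<rparr>\<^esub> ?C')"
    by (rule arith_helper[OF _ _ cC pC' pH]) (use L1 L2 oB oB' in simp_all)
  then show ?thesis by (simp add: order_def FactGroup_def)
qed

lemma subnormal_down:
  assumes fin: "finite (carrier G)" and sn: "sigma_subnormal S (G Mod H) A'"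
  shows "sigma_subnormal S G (\<Union>A')"
proof -
  from sn obtain n f where f0: "f 0 = A'" and fn: "f n = carrier (G Mod H)"
    and fs: "\<forall>i\<le>n. subgroup (f i) (G Mod H)"
    and st: "\<forall>i<n. f i \<subseteq> f (Suc i) \<and> (f i \<lhd> (G Mod H)\<lparr>carrier := f (Suc i)\<rparr> \<or>
        sigma_primary S (((G Mod H)\<lparr>carrier := f (Suc i)\<rparr>) Mod core ((G Mod H)\<lparr>carrier := f (Suc i)\<rparr>) (f i)))"
    unfolding sigma_subnormal_def by blast
  show ?thesis unfolding sigma_subnormal_def
  proof (intro exI[of _ n] exI[of _ "\<lambda>i. \<Union>(f i)"] conjI allI impI)
    show "\<Union>(f 0) = \<Union>A'" using f0 by simp
  next
    show "\<Union>(f n) = carrier G" using fn rcosets_part_G[OF subgroup_axioms] by (simp add: FactGroup_def)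
  next
    fix i assume "i \<le> n" then show "subgroup (\<Union>(f i)) G" using fs lift_subgroup(1) by blast
  next
    fix i assume i: "i < n"
    have sub: "f i \<subseteq> f (Suc i)" using st i by blast
    then show "\<Union>(f i) \<subseteq> \<Union>(f (Suc i))" by blast
  next
    fix i assume i: "i < n"
    have s1: "subgroup (f i) (G Mod H)" using fs i by simp
    have s2: "subgroup (f (Suc i)) (G Mod H)" using fs i by simp
    have sub: "f i \<subseteq> f (Suc i)" using st i by blast
    show "\<Union>(f i) \<lhd> G\<lparr>carrier := \<Union>(f (Suc i))\<rparr> \<or>
        sigma_primary S ((G\<lparr>carrier := \<Union>(f (Suc i))\<rparr>) Mod core (G\<lparr>carrier := \<Union>(f (Suc i))\<rparr>) (\<Union>(f i)))"
      using st i normal_step[OF s2 s1 sub] sigma_primary_order[OF order_step[OF fin s2 s1 sub], of S] by blast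
  qed
qed

end


lemma (in group) subnormal_trans:
  assumes sK: "subgroup K G" and snK: "sigma_subnormal S G K"
    and snA: "sigma_subnormal S (G\<lparr>carrier := K\<rparr>) A"
  shows "sigma_subnormal S G A"
proof -
  have "\<exists>n1 f1. f1 0 = A \<and> f1 n1 = K \<and> (\<forall>i\<le>n1. subgroup (f1 i) (G\<lparr>carrier := K\<rparr>)) \<and>
        (\<forall>i<n1. f1 i \<subseteq> f1 (Suc i) \<and> (f1 i \<lhd> G\<lparr>carrier := f1 (Suc i)\<rparr> \<or>
            sigma_primary S ((G\<lparr>carrier := f1 (Suc i)\<rparr>) Mod (core (G\<lparr>carrier := f1 (Suc i)\<rparr>) (f1 i)))))"
    using snA unfolding sigma_subnormal_def by simp
  then obtain n1 f1 where a0: "f1 0 = A" and an: "f1 n1 = K"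
    and as: "\<forall>i\<le>n1. subgroup (f1 i) (G\<lparr>carrier := K\<rparr>)"
    and ast: "\<forall>i<n1. f1 i \<subseteq> f1 (Suc i) \<and> (f1 i \<lhd> G\<lparr>carrier := f1 (Suc i)\<rparr> \<or>
            sigma_primary S ((G\<lparr>carrier := f1 (Suc i)\<rparr>) Mod (core (G\<lparr>carrier := f1 (Suc i)\<rparr>) (f1 i))))"
    by blast
  from snK obtain n2 f2 where b0: "f2 0 = K" and bn: "f2 n2 = carrier G"
    and bs: "\<forall>i\<le>n2. subgroup (f2 i) G"
    and bst: "\<forall>i<n2. f2 i \<subseteq> f2 (Suc i) \<and> (f2 i \<lhd> G\<lparr>carrier := f2 (Suc i)\<rparr> \<or>
            sigma_primary S ((G\<lparr>carrier := f2 (Suc i)\<rparr>) Mod (core (G\<lparr>carrier := f2 (Suc i)\<rparr>) (f2 i))))"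
    unfolding sigma_subnormal_def by blast
  define f where "f i = (if i \<le> n1 then f1 i else f2 (i - n1))" for i
  have fhi: "f i = f2 (i - n1)" if "n1 \<le> i" for i
    using that an b0 unfolding f_def by (cases "i = n1") auto
  show ?thesis unfolding sigma_subnormal_def
  proof (intro exI[of _ "n1 + n2"] exI[of _ f] conjI allI impI)
    show "f 0 = A" using a0 unfolding f_def by simp
  next
    show "f (n1 + n2) = carrier G" using fhi[of "n1 + n2"] bn by simp
  next
    fix i assume i: "i \<le> n1 + n2"
    show "subgroup (f i) G"
    proof (cases "i \<le> n1")
      case True then show ?thesis using as incl_subgroup[OF sK] unfolding f_def by simp
    next
      case False then show ?thesis using fhi[of i] bs i by simp
    qed
  next
    fix i assume i: "i < n1 + n2"
    have "f i \<subseteq> f (Suc i) \<and> (f i \<lhd> G\<lparr>carrier := f (Suc i)\<rparr> \<or>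
            sigma_primary S ((G\<lparr>carrier := f (Suc i)\<rparr>) Mod (core (G\<lparr>carrier := f (Suc i)\<rparr>) (f i))))"
    proof (cases "Suc i \<le> n1")
      case True
      then have "f i = f1 i" "f (Suc i) = f1 (Suc i)" unfolding f_def by auto
      then show ?thesis using ast True by simp
    next
      case False
      then have "f i = f2 (i - n1)" "f (Suc i) = f2 (Suc (i - n1))" "i - n1 < n2"
        using fhi[of i] fhi[of "Suc i"] i by (auto simp: Suc_diff_le)
      then show ?thesis using bst by simp
    qed
    then show "f i \<subseteq> f (Suc i)"
      and "f i \<lhd> G\<lparr>carrier := f (Suc i)\<rparr> \<or>
            sigma_primary S ((G\<lparr>carrier := f (Suc i)\<rparr>) Mod (core (G\<lparr>carrier := f (Suc i)\<rparr>) (f i)))"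
      by auto
  qed
qed

context normal
begin

lemma normal_in_sub:
  assumes sK: "subgroup K G" and HK: "H \<subseteq> K"
  shows "H \<lhd> G\<lparr>carrier := K\<rparr>"
proof -
  interpret GK: group "G\<lparr>carrier := K\<rparr>" by (rule subgroup_imp_group[OF sK])
  show ?thesis
  proof (rule GK.normal_invI)
    show "subgroup H (G\<lparr>carrier := K\<rparr>)" by (rule subgroup_incl[OF subgroup_axioms sK HK])
    fix x h assume x: "x \<in> carrier (G\<lparr>carrier := K\<rparr>)" and h: "h \<in> H"
    have xK: "x \<in> K" using x by simp
    have xc: "x \<in> carrier G" using xK sK subgroup.subset by blast
    have "x \<otimes> h \<otimes> inv x \<in> H" by (rule inv_op_closed2[OF xc h])
    then show "x \<otimes>\<^bsub>G\<lparr>carrier := K\<rparr>\<^esub> h \<otimes>\<^bsub>G\<lparr>carrier := K\<rparr>\<^esub> inv\<^bsub>G\<lparr>carrier := K\<rparr>\<^esub> x \<in> H"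
      using m_inv_consistent[OF sK xK] by simp
  qed
qed

lemma Mod_restrict:
  assumes sK': "subgroup K' (G Mod H)"
  shows "(G Mod H)\<lparr>carrier := K'\<rparr> = (G\<lparr>carrier := \<Union>K'\<rparr>) Mod H"
proof -
  have K'c: "K' \<subseteq> carrier (G Mod H)" using sK' subgroup.subset by blast
  have "rcosets\<^bsub>G\<lparr>carrier := \<Union>K'\<rparr>\<^esub> H = (\<lambda>x. H #> x) ` \<Union>K'" unfolding RCOSETS_def by auto
  also have "\<dots> = K'" using rc_image_Union[OF K'c] by simp
  finally have e: "rcosets\<^bsub>G\<lparr>carrier := \<Union>K'\<rparr>\<^esub> H = K'" .
  show ?thesis unfolding FactGroup_def using e by (simp add: fun_eq_iff)
qed

end

theorem lemma2p4:
  fixes G :: "('a, 'b) monoid_scheme" and \<Sigma> :: "nat set set" and N :: "'a set"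
  assumes "sigma_partition \<Sigma>"
    and "group G"
    and "finite (carrier G)"
    and "N \<lhd> G"
    and "QsigmaT \<Sigma> G"
  shows "QsigmaT \<Sigma> (G Mod N)"
proof -
  interpret N: normal N G by (rule assms(4))
  interpret Q: group "G Mod N" by (rule N.factorgroup_is_group)
  show ?thesis unfolding QsigmaT_def
  proof (intro allI impI)
    fix H' K' assume qK: "sigma_quasinormal \<Sigma> (G Mod N) K'"
      and qH: "sigma_quasinormal \<Sigma> ((G Mod N)\<lparr>carrier := K'\<rparr>) H'"
    have sK': "subgroup K' (G Mod N)" using qK unfolding sigma_quasinormal_def by blast
    have sK: "subgroup (\<Union>K') G" and NK: "N \<subseteq> \<Union>K'" using N.lift_subgroup[OF sK'] by auto
    have req: "(G Mod N)\<lparr>carrier := K'\<rparr> = (G\<lparr>carrier := \<Union>K'\<rparr>) Mod N" by (rule N.Mod_restrict[OF sK'])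
    have nN1: "N \<lhd> G\<lparr>carrier := \<Union>K'\<rparr>" by (rule N.normal_in_sub[OF sK NK])
    interpret N1: normal N "G\<lparr>carrier := \<Union>K'\<rparr>" by (rule nN1)
    have fin1: "finite (carrier (G\<lparr>carrier := \<Union>K'\<rparr>))"
      using finite_subset[OF subgroup.subset[OF sK] assms(3)] by simp
    have qH1: "sigma_quasinormal \<Sigma> ((G\<lparr>carrier := \<Union>K'\<rparr>) Mod N) H'" using qH req by simp
    have sH1: "subgroup H' ((G\<lparr>carrier := \<Union>K'\<rparr>) Mod N)" using qH1 unfolding sigma_quasinormal_def by blast
    have snH1: "sigma_subnormal \<Sigma> ((G\<lparr>carrier := \<Union>K'\<rparr>) Mod N) H'" using qH1 unfolding sigma_quasinormal_def by blast
    have mH1: "modular_subgroup ((G\<lparr>carrier := \<Union>K'\<rparr>) Mod N) H'" using qH1 unfolding sigma_quasinormal_def by blast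
    have "sigma_quasinormal \<Sigma> (G\<lparr>carrier := \<Union>K'\<rparr>) (\<Union>H')"
      unfolding sigma_quasinormal_def
      using N1.lift_subgroup(1)[OF sH1] N1.subnormal_down[OF fin1 snH1] N1.mod_down[OF sH1 mH1] by blast
    moreover have "sigma_quasinormal \<Sigma> G (\<Union>K')"
    proof -
      have "sigma_subnormal \<Sigma> (G Mod N) K'" "modular_subgroup (G Mod N) K'"
        using qK unfolding sigma_quasinormal_def by blast+
      then show ?thesis unfolding sigma_quasinormal_def
        using sK N.subnormal_down[OF assms(3)] N.mod_down[OF sK'] by blast
    qed
    ultimately have "sigma_quasinormal \<Sigma> G (\<Union>H')" using assms(5) unfolding QsigmaT_def by blast
    then have mH: "modular_subgroup G (\<Union>H')" unfolding sigma_quasinormal_def by blast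
    have sH'K: "subgroup H' ((G Mod N)\<lparr>carrier := K'\<rparr>)" using sH1 req by simp
    have sH': "subgroup H' (G Mod N)" by (rule Q.incl_subgroup[OF sK' sH'K])
    have "modular_subgroup (G Mod N) H'" by (rule N.mod_up[OF sH' mH])
    moreover have "sigma_subnormal \<Sigma> (G Mod N) H'"
    proof (rule Q.subnormal_trans[OF sK'])
      show "sigma_subnormal \<Sigma> (G Mod N) K'" using qK unfolding sigma_quasinormal_def by blast
      show "sigma_subnormal \<Sigma> ((G Mod N)\<lparr>carrier := K'\<rparr>) H'" using qH unfolding sigma_quasinormal_def by blast
    qed
    ultimately show "sigma_quasinormal \<Sigma> (G Mod N) H'" unfolding sigma_quasinormal_def using sH' by blast
  qed
qed


end
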